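(* Let $\mathcal{R}_{\rm SW}$ be the family of all south-west quadrants. For $k=2$ and any $m \geq 2$, we do not have hitting $2$-cliques with respect to $\mathcal{R}_{\rm SW}$; that is, there exists a finite point set $V \subset \mathbb{R}^2$ such that for every collection of pairwise disjoint $2$-element subsets of $V$ some hyperedge of $\mathcal{H}(V,\mathcal{R}_{\rm SW},m)$ contains none of these subsets.
   Context: $\mathcal{R}_{\rm SW} = \{\{(x,y) : x \leq a,\ y \leq b\} : a,b \in \mathbb{R}\}$. For a finite $V \subset \mathbb{R}^2$, $\mathcal{H}(V,\mathcal{R},m)$ is the hypergraph on $V$ whose hyperedges are the sets $V \cap R$, $R \in \mathcal{R}$, of size exactly $m$. For fixed $k,m,\mathcal{R}$ we say we have hitting $k$-cliques if for every finite $V \subset \mathbb{R}^2$ there exist pairwise disjoint $k$-element subsets of $V$ such that every hyperedge of $\mathcal{H}(V,\mathcal{R},m)$ fully contains at least one of them. *)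

theory Defs
  imports Main "HOL-Analysis.Analysis"
begin

definition SW_quadrants :: "(real \<times> real) set set" where
  "SW_quadrants = {{(x, y). x \<le> a \<and> y \<le> b} | a b. True}"

definition hyperedges :: "(real \<times> real) set \<Rightarrow> (real \<times> real) set set \<Rightarrow> nat \<Rightarrow> (real \<times> real) set set" where
  "hyperedges V \<R> m = {V \<inter> R | R. R \<in> \<R> \<and> card (V \<inter> R) = m}"

definition has_hitting_cliques :: "nat \<Rightarrow> nat \<Rightarrow> (real \<times> real) set set \<Rightarrow> bool" where
  "has_hitting_cliques k m \<R> \<longleftrightarrow>
     (\<forall>V. finite V \<longrightarrow>
        (\<exists>\<C>. (\<forall>C\<in>\<C>. C \<subseteq> V \<and> card C = k) \<and>
              (\<forall>C\<in>\<C>. \<forall>D\<in>\<C>. C \<noteq> D \<longrightarrow> C \<inter> D = {}) \<and>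
              (\<forall>E\<in>hyperedges V \<R> m. \<exists>C\<in>\<C>. C \<subseteq> E)))"

end

theory Submission
  imports Defs
begin

definition disjfam :: "(real \<times> real) set set \<Rightarrow> bool" where
  "disjfam \<C> \<longleftrightarrow> (\<forall>C\<in>\<C>. \<forall>D\<in>\<C>. C \<noteq> D \<longrightarrow> C \<inter> D = {})"

definition bad :: "nat \<Rightarrow> (real \<times> real) set \<Rightarrow> bool" where
  "bad m V \<longleftrightarrow> (\<forall>\<C>. (\<forall>C\<in>\<C>. card C = 2) \<longrightarrow> disjfam \<C> \<longrightarrow>
      (\<exists>E\<in>hyperedges V SW_quadrants m. \<forall>C\<in>\<C>. \<not> C \<subseteq> E))"

lemma hyperedges_sub: "E \<in> hyperedges V R m \<Longrightarrow> E \<subseteq> V"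
  unfolding hyperedges_def by auto

lemma hyperedgesI: "R \<in> RR \<Longrightarrow> card (V \<inter> R) = m \<Longrightarrow> V \<inter> R \<in> hyperedges V RR m"
  unfolding hyperedges_def by blast

lemma lift:
  assumes IH: "bad m V"
    and ud: "\<And>q. u (d q) = q" and du: "\<And>q. d (u q) = q"
    and edge: "\<And>E. E \<in> hyperedges V SW_quadrants m \<Longrightarrow> insert z0 (d ` E) \<in> H"
    and c2: "\<forall>C\<in>\<C>. card C = 2" and dj: "disjfam \<C>"
    and cov: "\<forall>E\<in>H. \<exists>C\<in>\<C>. C \<subseteq> E"
  shows "\<exists>C\<in>\<C>. z0 \<in> C \<and> C \<subseteq> insert z0 (d ` V)"
proof -
  have inju: "inj u" by (metis du injI)
  let ?D = "(\<lambda>C. u ` C) ` \<C>"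
  have D1: "\<forall>C\<in>?D. card C = 2" using c2 inju by (auto simp: card_image inj_on_subset)
  have D2: "disjfam ?D"
  proof -
    { fix C D assume "C \<in> \<C>" "D \<in> \<C>" "u ` C \<noteq> u ` D"
      then have "C \<noteq> D" by auto
      with dj \<open>C \<in> \<C>\<close> \<open>D \<in> \<C>\<close> have "C \<inter> D = {}" unfolding disjfam_def by auto
      then have "u ` C \<inter> u ` D = {}" using image_Int[OF inju, of C D] by simp }
    then show ?thesis unfolding disjfam_def by blast
  qed
  obtain E' where E': "E' \<in> hyperedges V SW_quadrants m" "\<forall>C\<in>?D. \<not> C \<subseteq> E'"
    using IH[unfolded bad_def, rule_format, OF D1[rule_format] D2] by blast
  from cov edge[OF E'(1)] obtain C where C: "C \<in> \<C>" "C \<subseteq> insert z0 (d ` E')" by blast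
  have "z0 \<in> C"
  proof (rule ccontr)
    assume "z0 \<notin> C"
    then have "C \<subseteq> d ` E'" using C by auto
    then have "u ` C \<subseteq> E'" using ud by auto
    with E'(2) C(1) show False by auto
  qed
  moreover have "C \<subseteq> insert z0 (d ` V)" using C hyperedges_sub[OF E'(1)] by auto
  ultimately show ?thesis using C by blast
qed


definition dA :: "real \<Rightarrow> real \<times> real \<Rightarrow> real \<times> real" where
  "dA c p = (fst p + 1, snd p + 1 + c)"
definition dB :: "real \<Rightarrow> real \<times> real \<Rightarrow> real \<times> real" where
  "dB c p = (fst p + 1 + c, snd p + 1)"
definition Wset :: "real \<Rightarrow> (real \<times> real) set \<Rightarrow> (real \<times> real) set" where
  "Wset c V = insert (1/2, 1/2) (dA c ` V \<union> dB c ` V)"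

definition inbox :: "real \<Rightarrow> (real \<times> real) set \<Rightarrow> bool" where
  "inbox c V \<longleftrightarrow> (\<forall>p\<in>V. 0 < fst p \<and> fst p < c \<and> 0 < snd p \<and> snd p < c)"

lemma edgeA:
  assumes E: "E \<in> hyperedges V SW_quadrants m" and m: "m \<ge> 1" and c: "c > 0"
    and box: "inbox c V" and fin: "finite V"
  shows "insert (1/2,1/2) (dA c ` E) \<in> hyperedges (Wset c V) SW_quadrants (Suc m)"
proof -
  obtain a b where R: "E = V \<inter> {(x, y). x \<le> a \<and> y \<le> b}" and cm: "card E = m"
    using E unfolding hyperedges_def SW_quadrants_def by blast
  have "E \<noteq> {}" using cm m by auto
  then obtain p where p: "p \<in> E" by blast
  have a: "a > 0" "b > 0" using p R box unfolding inbox_def by auto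
  let ?R = "{(x, y). x \<le> min a c + 1 \<and> y \<le> min b c + 1 + c}"
  have R': "?R \<in> SW_quadrants" unfolding SW_quadrants_def by blast
  have eq: "Wset c V \<inter> ?R = insert (1/2,1/2) (dA c ` E)"
  proof (rule set_eqI)
    fix q
    show "q \<in> Wset c V \<inter> ?R \<longleftrightarrow> q \<in> insert (1/2,1/2) (dA c ` E)"
    proof
      assume q: "q \<in> Wset c V \<inter> ?R"
      then consider "q = (1/2,1/2)" | r where "r \<in> V" "q = dA c r" | r where "r \<in> V" "q = dB c r"
        unfolding Wset_def by blast
      then show "q \<in> insert (1/2,1/2) (dA c ` E)"
      proof cases
        case 1 then show ?thesis by simp
      next
        case 2
        then have "fst r < c" "snd r < c" using box unfolding inbox_def by auto
        then have "r \<in> E" using q 2 R unfolding dA_def by (auto simp: min_def mem_Times_iff split: if_splits)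
        then show ?thesis using 2 by blast
      next
        case 3
        then have "fst r > 0" using box unfolding inbox_def by auto
        then show ?thesis using q 3 unfolding dB_def by (auto simp: min_def split: if_splits)
      qed
    next
      assume q: "q \<in> insert (1/2,1/2) (dA c ` E)"
      then consider "q = (1/2,1/2)" | r where "r \<in> E" "q = dA c r" by blast
      then show "q \<in> Wset c V \<inter> ?R"
      proof cases
        case 1 then show ?thesis using a c unfolding Wset_def by auto
      next
        case 2
        then have "r \<in> V" "fst r \<le> a" "snd r \<le> b" using R by auto
        moreover have "fst r < c" "snd r < c" using box \<open>r \<in> V\<close> unfolding inbox_def by auto
        ultimately show ?thesis using 2 unfolding Wset_def dA_def by auto
      qed
    qed
  qed
  have "inj (dA c)" unfolding dA_def by (rule injI) (auto simp: prod_eq_iff)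
  then have "card (dA c ` E) = m" using cm by (simp add: card_image inj_on_subset)
  moreover have "(1/2, 1/2) \<notin> dA c ` E"
  proof
    assume "(1/2, 1/2) \<in> dA c ` E"
    then obtain r where "r \<in> E" "(1/2, 1/2) = dA c r" by blast
    moreover then have "snd r > 0" using R box unfolding inbox_def by auto
    ultimately show False using c unfolding dA_def by auto
  qed
  moreover have "finite E" using R fin by auto
  ultimately have "card (insert (1/2,1/2) (dA c ` E)) = Suc m" by simp
  then have "card (Wset c V \<inter> ?R) = Suc m" using eq by simp
  from hyperedgesI[OF R' this] show ?thesis using eq by simp
qed

lemma edgeB:
  assumes E: "E \<in> hyperedges V SW_quadrants m" and m: "m \<ge> 1" and c: "c > 0"
    and box: "inbox c V" and fin: "finite V"
  shows "insert (1/2,1/2) (dB c ` E) \<in> hyperedges (Wset c V) SW_quadrants (Suc m)"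
proof -
  obtain a b where R: "E = V \<inter> {(x, y). x \<le> a \<and> y \<le> b}" and cm: "card E = m"
    using E unfolding hyperedges_def SW_quadrants_def by blast
  have "E \<noteq> {}" using cm m by auto
  then obtain p where p: "p \<in> E" by blast
  have a: "a > 0" "b > 0" using p R box unfolding inbox_def by auto
  let ?R = "{(x, y). x \<le> min a c + 1 + c \<and> y \<le> min b c + 1}"
  have R': "?R \<in> SW_quadrants" unfolding SW_quadrants_def by blast
  have eq: "Wset c V \<inter> ?R = insert (1/2,1/2) (dB c ` E)"
  proof (rule set_eqI)
    fix q
    show "q \<in> Wset c V \<inter> ?R \<longleftrightarrow> q \<in> insert (1/2,1/2) (dB c ` E)"
    proof
      assume q: "q \<in> Wset c V \<inter> ?R"
      then consider "q = (1/2,1/2)" | r where "r \<in> V" "q = dB c r" | r where "r \<in> V" "q = dA c r"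
        unfolding Wset_def by blast
      then show "q \<in> insert (1/2,1/2) (dB c ` E)"
      proof cases
        case 1 then show ?thesis by simp
      next
        case 2
        then have "fst r < c" "snd r < c" using box unfolding inbox_def by auto
        then have "r \<in> E" using q 2 R unfolding dB_def by (auto simp: min_def mem_Times_iff split: if_splits)
        then show ?thesis using 2 by blast
      next
        case 3
        then have "snd r > 0" using box unfolding inbox_def by auto
        then show ?thesis using q 3 unfolding dA_def by (auto simp: min_def split: if_splits)
      qed
    next
      assume q: "q \<in> insert (1/2,1/2) (dB c ` E)"
      then consider "q = (1/2,1/2)" | r where "r \<in> E" "q = dB c r" by blast
      then show "q \<in> Wset c V \<inter> ?R"
      proof cases
        case 1 then show ?thesis using a c unfolding Wset_def by auto
      next
        case 2
        then have "r \<in> V" "fst r \<le> a" "snd r \<le> b" using R by auto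
        moreover have "fst r < c" "snd r < c" using box \<open>r \<in> V\<close> unfolding inbox_def by auto
        ultimately show ?thesis using 2 unfolding Wset_def dB_def by auto
      qed
    qed
  qed
  have "inj (dB c)" unfolding dB_def by (rule injI) (auto simp: prod_eq_iff)
  then have "card (dB c ` E) = m" using cm by (simp add: card_image inj_on_subset)
  moreover have "(1/2, 1/2) \<notin> dB c ` E"
  proof
    assume "(1/2, 1/2) \<in> dB c ` E"
    then obtain r where "r \<in> E" "(1/2, 1/2) = dB c r" by blast
    moreover then have "fst r > 0" using R box unfolding inbox_def by auto
    ultimately show False using c unfolding dB_def by auto
  qed
  moreover have "finite E" using R fin by auto
  ultimately have "card (insert (1/2,1/2) (dB c ` E)) = Suc m" by simp
  then have "card (Wset c V \<inter> ?R) = Suc m" using eq by simp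
  from hyperedgesI[OF R' this] show ?thesis using eq by simp
qed


lemma disjAB: assumes "inbox c V" shows "dA c ` V \<inter> dB c ` V = {}"
proof -
  have "fst q < 1 + c" if "q \<in> dA c ` V" for q using that assms unfolding inbox_def dA_def by auto
  moreover have "fst q > 1 + c" if "q \<in> dB c ` V" for q using that assms unfolding inbox_def dB_def by auto
  ultimately show ?thesis by force
qed

lemma mainlem: "m \<ge> 1 \<Longrightarrow> \<exists>V c. finite V \<and> c > 0 \<and> inbox c V \<and> bad m V"
proof (induction m rule: nat_induct_at_least)
  case base
  let ?V = "{(1/2, 1/2)} :: (real \<times> real) set"
  have "bad 1 ?V"
    unfolding bad_def
  proof (intro allI impI)
    fix \<C> :: "(real \<times> real) set set"
    assume c2: "\<forall>C\<in>\<C>. card C = 2"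
    have i: "?V \<inter> {(x, y). x \<le> 1 \<and> y \<le> 1} = ?V" by auto
    have R1: "{(x, y). x \<le> (1::real) \<and> y \<le> 1} \<in> SW_quadrants" unfolding SW_quadrants_def by blast
    have E: "?V \<in> hyperedges ?V SW_quadrants 1"
      using hyperedgesI[OF R1, of ?V 1] i by simp
    have "\<forall>C\<in>\<C>. \<not> C \<subseteq> ?V"
    proof (intro ballI notI)
      fix C assume "C \<in> \<C>" "C \<subseteq> ?V"
      then have "card C \<le> 1" using card_mono[of ?V C] by auto
      with c2 \<open>C \<in> \<C>\<close> show False by auto
    qed
    with E show "\<exists>E\<in>hyperedges ?V SW_quadrants 1. \<forall>C\<in>\<C>. \<not> C \<subseteq> E" by blast
  qed
  moreover have "inbox 1 ?V" unfolding inbox_def by auto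
  moreover have "finite ?V" by simp
  moreover have "(1::real) > 0" by simp
  ultimately show ?case by (intro exI[of _ ?V] exI[of _ "1::real"]) simp
next
  case (Suc m)
  then obtain V c where V: "finite V" "c > 0" "inbox c V" "bad m V" by blast
  let ?W = "Wset c V"
  have finW: "finite ?W" using V(1) unfolding Wset_def by auto
  have boxW: "inbox (2*c+2) ?W"
    unfolding inbox_def
  proof
    fix q assume "q \<in> ?W"
    then consider "q = (1/2,1/2)" | r where "r \<in> V" "q = dA c r" | r where "r \<in> V" "q = dB c r"
      unfolding Wset_def by blast
    then show "0 < fst q \<and> fst q < 2*c+2 \<and> 0 < snd q \<and> snd q < 2*c+2"
    proof cases
      case 1 then show ?thesis using V(2) by simp
    next
      case 2
      then have "0 < fst r" "fst r < c" "0 < snd r" "snd r < c" using V(3) unfolding inbox_def by auto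
      then show ?thesis using 2 V(2) unfolding dA_def by simp
    next
      case 3
      then have "0 < fst r" "fst r < c" "0 < snd r" "snd r < c" using V(3) unfolding inbox_def by auto
      then show ?thesis using 3 V(2) unfolding dB_def by simp
    qed
  qed
  have "bad (Suc m) ?W"
    unfolding bad_def
  proof (intro allI impI)
    fix \<C> :: "(real \<times> real) set set"
    assume c2: "\<forall>C\<in>\<C>. card C = 2" and dj: "disjfam \<C>"
    show "\<exists>E\<in>hyperedges ?W SW_quadrants (Suc m). \<forall>C\<in>\<C>. \<not> C \<subseteq> E"
    proof (rule ccontr)
      assume "\<not> ?thesis"
      then have cov: "\<forall>E\<in>hyperedges ?W SW_quadrants (Suc m). \<exists>C\<in>\<C>. C \<subseteq> E" by blast
      obtain CA where CA: "CA \<in> \<C>" "(1/2,1/2) \<in> CA" "CA \<subseteq> insert (1/2,1/2) (dA c ` V)"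
      proof -
        have h1: "\<And>q. (\<lambda>p. (fst p - 1, snd p - 1 - c)) (dA c q) = q" unfolding dA_def by simp
        have h2: "\<And>q. dA c ((\<lambda>p. (fst p - 1, snd p - 1 - c)) q) = q" unfolding dA_def by simp
        from lift[OF V(4) h1 h2 edgeA[OF _ Suc(1) V(2,3,1)] c2 dj cov]
        show ?thesis using that by blast
      qed
      obtain CB where CB: "CB \<in> \<C>" "(1/2,1/2) \<in> CB" "CB \<subseteq> insert (1/2,1/2) (dB c ` V)"
      proof -
        have h1: "\<And>q. (\<lambda>p. (fst p - 1 - c, snd p - 1)) (dB c q) = q" unfolding dB_def by simp
        have h2: "\<And>q. dB c ((\<lambda>p. (fst p - 1 - c, snd p - 1)) q) = q" unfolding dB_def by simp
        from lift[OF V(4) h1 h2 edgeB[OF _ Suc(1) V(2,3,1)] c2 dj cov]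
        show ?thesis using that by blast
      qed
      show False
      proof (cases "CA = CB")
        case True
        then have "CA \<subseteq> {(1/2,1/2)}" using CA(3) CB(3) disjAB[OF V(3)] by blast
        then have "card CA \<le> 1" using card_mono[of "{(1/2,1/2)}" CA] by auto
        with c2 CA(1) show False by auto
      next
        case False
        with dj CA(1,2) CB(1,2) show False unfolding disjfam_def by blast
      qed
    qed
  qed
  moreover have "(2*c+2::real) > 0" using V(2) by auto
  ultimately show ?case using finW boxW by (intro exI[of _ ?W] exI[of _ "2*c+2"]) simp
qed

theorem corollary5:
  fixes m :: nat
  assumes "m \<ge> 2"
  shows "\<not> has_hitting_cliques 2 m SW_quadrants"
proof
  assume h: "has_hitting_cliques 2 m SW_quadrants"
  have "m \<ge> 1" using assms by simp
  from mainlem[OF this] obtain V c where V: "finite V" "bad m V" by blast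
  have ex: "\<exists>\<C>. (\<forall>C\<in>\<C>. C \<subseteq> V \<and> card C = 2) \<and> (\<forall>C\<in>\<C>. \<forall>D\<in>\<C>. C \<noteq> D \<longrightarrow> C \<inter> D = {}) \<and>
      (\<forall>E\<in>hyperedges V SW_quadrants m. \<exists>C\<in>\<C>. C \<subseteq> E)"
    using h V(1) unfolding has_hitting_cliques_def by (elim allE impE)
  from ex obtain \<C> where C0: "(\<forall>C\<in>\<C>. C \<subseteq> V \<and> card C = 2) \<and> (\<forall>C\<in>\<C>. \<forall>D\<in>\<C>. C \<noteq> D \<longrightarrow> C \<inter> D = {}) \<and>
      (\<forall>E\<in>hyperedges V SW_quadrants m. \<exists>C\<in>\<C>. C \<subseteq> E)" ..
  note C = conjunct1[OF C0] conjunct1[OF conjunct2[OF C0]] conjunct2[OF conjunct2[OF C0]]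
  have D1: "\<forall>C\<in>\<C>. card C = 2" using C(1) by blast
  have D2: "disjfam \<C>" using C(2) unfolding disjfam_def by blast
  obtain E where "E \<in> hyperedges V SW_quadrants m" "\<forall>C\<in>\<C>. \<not> C \<subseteq> E"
    using V(2)[unfolded bad_def, rule_format, OF D1[rule_format] D2] by blast
  with C(3) show False by blast
qed

end
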